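(* Let $T>0$, let $f:(0,T)\to\mathbb{R}$ be nondecreasing and $g:(0,T)\to\mathbb{R}$ be of bounded variation, both left-continuous and bounded, with $f(t)\ge g(t)$ for all $t\in(0,T)$. Suppose there is a constant $C>0$ such that: (i) for every $\varepsilon>0$, every $t\in(0,T)$ with $f(t)>g(t)+\varepsilon$, and every $t'\in(0,T)$ with $0\le t'-t<\frac{\varepsilon}{C}$, one has $f(t')=f(t)$ and $f(t')>g(t')$; (ii) $f(t^+)-f(t)=[g(t^+)-g(t)]^+$ for every $t\in(0,T)$; (iii) $g(t_2)-g(t_1)\le C(t_2-t_1)$ for all $t_1<t_2$ in $[a,b)$ whenever $[a,b)\subset\{f>g\}$. Then the measure $\partial_tf$ is concentrated on $\{f=g\}$, and $\partial_tf(E)=(\partial_tg)^+(E)$ for every Borel set $E\subset\{f=g\}$.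
   Context: $\partial_tf$ is the Radon measure with $\partial_tf([a,b))=f(b)-f(a)$ for $[a,b)\subset(0,T)$; $\partial_tg$ is the distributional derivative of $g$ (a finite signed measure) and $(\partial_tg)^+$ its positive part, so that $(\partial_tg)^+([a,b))=\sup\{\sum_{i=1}^m(g(t_i)-g(t_{i-1}))^+:a=t_0<\dots<t_m=b\}$. $h(t^+)$ denotes the right limit. *)

theory Defs
  imports "HOL-Analysis.Analysis"
begin

definition is_partition :: "real \<Rightarrow> real \<Rightarrow> nat \<Rightarrow> (nat \<Rightarrow> real) \<Rightarrow> bool" where
  "is_partition a b m t \<longleftrightarrow> t 0 = a \<and> t m = b \<and> (\<forall>i<m. t i < t (Suc i))"

definition bounded_variation_on :: "(real \<Rightarrow> real) \<Rightarrow> real set \<Rightarrow> bool" where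
  "bounded_variation_on g S \<longleftrightarrow>
     (\<exists>B. \<forall>m t. (\<forall>i\<le>m. t i \<in> S) \<and> (\<forall>i<m. t i < t (Suc i)) \<longrightarrow>
          (\<Sum>i\<in>{1..m}. \<bar>g (t i) - g (t (i - 1))\<bar>) \<le> B)"

definition pos_var :: "(real \<Rightarrow> real) \<Rightarrow> real \<Rightarrow> real \<Rightarrow> real" where
  "pos_var g a b = Sup {(\<Sum>i\<in>{1..m}. max (g (t i) - g (t (i - 1))) 0) | m t. is_partition a b m t}"

end

theory Submission
  imports Defs
begin

lemma ext_le:
  fixes \<mu> \<nu> \<kappa> :: "real measure" and T :: real
  assumes s\<mu>: "sets \<mu> = sets (restrict_space borel {0<..<T})"
    and s\<nu>: "sets \<nu> = sets (restrict_space borel {0<..<T})"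
    and s\<kappa>: "sets \<kappa> = sets (restrict_space borel {0<..<T})"
    and f\<mu>: "emeasure \<mu> {0<..<T} < \<infinity>"
    and f\<nu>: "emeasure \<nu> {0<..<T} < \<infinity>"
    and f\<kappa>: "emeasure \<kappa> {0<..<T} < \<infinity>"
    and le: "\<And>a b. 0 < a \<Longrightarrow> a < b \<Longrightarrow> b < T \<Longrightarrow>
        emeasure \<mu> {a..<b} \<le> emeasure \<nu> {a..<b} + emeasure \<kappa> {a..<b}"
    and E: "E \<in> sets \<mu>"
  shows "emeasure \<mu> E \<le> emeasure \<nu> E + emeasure \<kappa> E"
proof -
  define \<Omega> where "\<Omega> = {0<..<T::real}"
  define G where "G = ((\<inter>) \<Omega>) ` range (\<lambda>(a, b). {a ..< b :: real})"
  have G_iff: "X \<in> G \<longleftrightarrow> (\<exists>a b. X = \<Omega> \<inter> {a..<b})" for X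
    unfolding G_def by auto
  have sets_eq: "sets (restrict_space borel \<Omega>) = sigma_sets \<Omega> G"
  proof -
    have sb: "sets borel = sigma_sets UNIV (range (\<lambda>(a, b). {a ..< b :: real}))"
      by (subst borel_eq_atLeastLessThan) (simp add: sets_measure_of)
    have "\<Omega> \<in> sets borel" by (simp add: \<Omega>_def)
    then have Om: "\<Omega> \<in> sigma_sets UNIV (range (\<lambda>(a, b). {a ..< b :: real}))" using sb by simp
    have "sets (restrict_space borel \<Omega>) = ((\<inter>) \<Omega>) ` sigma_sets UNIV (range (\<lambda>(a, b). {a ..< b :: real}))"
      by (simp only: sets_restrict_space sb)
    then show ?thesis using sigma_sets_Int[OF Om] unfolding G_def by auto
  qed
  have sp: "space \<mu> = \<Omega>" "space \<nu> = \<Omega>" "space \<kappa> = \<Omega>"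
    using sets_eq_imp_space_eq[OF s\<mu>] sets_eq_imp_space_eq[OF s\<nu>] sets_eq_imp_space_eq[OF s\<kappa>]
    by (auto simp: \<Omega>_def space_restrict_space)
  have S\<mu>: "sets \<mu> = sigma_sets \<Omega> G" and S\<nu>: "sets \<nu> = sigma_sets \<Omega> G" and S\<kappa>: "sets \<kappa> = sigma_sets \<Omega> G"
    using s\<mu> s\<nu> s\<kappa> sets_eq by (auto simp: \<Omega>_def)
  have GS: "G \<subseteq> sigma_sets \<Omega> G" by auto
  interpret SR: semiring_of_sets \<Omega> G
  proof
    show "G \<subseteq> Pow \<Omega>" unfolding G_def by auto
    show "{} \<in> G" unfolding G_iff by (rule exI[of _ 1], rule exI[of _ 0]) auto
    fix a b assume "a \<in> G" "b \<in> G"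
    then obtain a1 a2 b1 b2 where ab: "a = \<Omega> \<inter> {a1..<a2}" "b = \<Omega> \<inter> {b1..<b2}" unfolding G_iff by blast
    show "a \<inter> b \<in> G" unfolding G_iff
      by (rule exI[of _ "max a1 b1"], rule exI[of _ "min a2 b2"]) (auto simp: ab)
    show "\<exists>C\<subseteq>G. finite C \<and> disjoint C \<and> a - b = \<Union>C"
    proof (cases "b1 < b2")
      case False
      then show ?thesis using \<open>a \<in> G\<close> by (intro exI[of _ "{a}"]) (auto simp: ab)
    next
      case True
      show ?thesis
    proof (intro exI conjI)
      let ?C = "{\<Omega> \<inter> {a1..<min a2 b1}, \<Omega> \<inter> {max a1 b2..<a2}}"
      show "?C \<subseteq> G" by (auto simp: G_iff)
      show "finite ?C" by simp
      show "disjoint ?C" unfolding disjoint_def using True by auto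
      show "a - b = \<Union>?C" by (auto simp: ab)
    qed
    qed
  qed
  have Gle: "emeasure \<mu> A \<le> emeasure \<nu> A + emeasure \<kappa> A" if A: "A \<in> G" for A
  proof -
    obtain a b where Ab: "A = \<Omega> \<inter> {a..<b}" using A G_iff by blast
    show ?thesis
    proof (cases "T > 0")
      case False then have "A = {}" by (auto simp: Ab \<Omega>_def)
      then show ?thesis by simp
    next
      case T: True
      define P where "P n = {max a (T/(real n+2))..<min b (T - T/(real n+2))}" for n :: nat
      have P_sub: "P n \<subseteq> A" for n
      proof -
        have "0 < T/(real n+2)" using T by simp
        moreover have "T - T/(real n+2) < T" using T by simp
        ultimately show ?thesis by (auto simp: P_def Ab \<Omega>_def)
      qed
      have inc: "incseq P"
      proof (rule incseq_SucI)
        fix n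
        have "T/(real (Suc n)+2) \<le> T/(real n+2)" using T by (intro divide_left_mono) auto
        then show "P n \<subseteq> P (Suc n)" unfolding P_def by auto
      qed
      have UP: "(\<Union>n. P n) = A"
      proof
        show "(\<Union>n. P n) \<subseteq> A" using P_sub by auto
        show "A \<subseteq> (\<Union>n. P n)"
        proof
          fix x assume "x \<in> A"
          then have x: "0 < x" "x < T" "a \<le> x" "x < b" by (auto simp: Ab \<Omega>_def)
          obtain n :: nat where n: "T / min x (T - x) < real n" using reals_Archimedean2 by blast
          have mpos: "0 < min x (T - x)" using x by simp
          have "T < real n * min x (T - x)" using n mpos by (simp add: field_simps)
          then have "T < (real n + 2) * min x (T - x)" using mpos by (smt (verit) mult_right_mono)
          then have h: "T / (real n + 2) < min x (T - x)"
            by (subst pos_divide_less_eq) (auto simp: mult.commute)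
          then show "x \<in> (\<Union>n. P n)" using x by (auto simp: P_def intro!: exI[of _ n])
        qed
      qed
      have PS: "P n \<in> sets \<mu>" "P n \<in> sets \<nu>" "P n \<in> sets \<kappa>" for n
      proof -
        have "P n \<in> G" unfolding G_iff using P_sub[of n]
          by (intro exI[of _ "max a (T/(real n+2))"] exI[of _ "min b (T - T/(real n+2))"]) (auto simp: P_def Ab \<Omega>_def)
        then show "P n \<in> sets \<mu>" "P n \<in> sets \<nu>" "P n \<in> sets \<kappa>" using S\<mu> S\<nu> S\<kappa> GS by auto
      qed
      have AS: "A \<in> sets \<nu>" "A \<in> sets \<kappa>" using A S\<nu> S\<kappa> GS by auto
      have "emeasure \<mu> A = (SUP n. emeasure \<mu> (P n))"
        using SUP_emeasure_incseq[of P \<mu>] inc PS UP by (auto simp: image_subset_iff)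
      also have "\<dots> \<le> emeasure \<nu> A + emeasure \<kappa> A"
      proof (rule SUP_least)
        fix n
        show "emeasure \<mu> (P n) \<le> emeasure \<nu> A + emeasure \<kappa> A"
        proof (cases "max a (T/(real n+2)) < min b (T - T/(real n+2))")
          case True
          have "0 < T/(real n+2)" using T by simp
          then have "emeasure \<mu> (P n) \<le> emeasure \<nu> (P n) + emeasure \<kappa> (P n)"
            unfolding P_def using True by (intro le) auto
          also have "\<dots> \<le> emeasure \<nu> A + emeasure \<kappa> A"
            using P_sub AS by (intro add_mono emeasure_mono) auto
          finally show ?thesis .
        next
          case False then have "P n = {}" by (auto simp: P_def)
          then show ?thesis by simp
        qed
      qed
      finally show ?thesis .
    qed
  qed
  have fin: "emeasure \<mu> A < \<infinity>" "emeasure \<nu> A < \<infinity>" "emeasure \<kappa> A < \<infinity>" if "A \<in> sigma_sets \<Omega> G" for A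
    using that f\<mu> f\<nu> f\<kappa> S\<mu> S\<nu> S\<kappa> sp
    by (auto intro: le_less_trans[OF emeasure_space] simp: \<Omega>_def)
  define \<rho> where "\<rho> A = emeasure \<nu> A + emeasure \<kappa> A - emeasure \<mu> A" for A
  have pos: "positive G \<rho>" unfolding positive_def \<rho>_def by simp
  have ca: "countably_additive G \<rho>"
    unfolding countably_additive_def
  proof (intro allI impI)
    fix A :: "nat \<Rightarrow> real set"
    assume A: "range A \<subseteq> G" "disjoint_family A" "\<Union> (range A) \<in> G"
    have AS: "range A \<subseteq> sets \<mu>" "range A \<subseteq> sets \<nu>" "range A \<subseteq> sets \<kappa>"
      "(\<Union>i. A i) \<in> sets \<mu>" "(\<Union>i. A i) \<in> sets \<nu>" "(\<Union>i. A i) \<in> sets \<kappa>"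
      using A S\<mu> S\<nu> S\<kappa> GS by auto
    have s1: "(\<Sum>i. emeasure \<mu> (A i)) = emeasure \<mu> (\<Union>i. A i)"
      using AS A by (intro suminf_emeasure) auto
    have s2: "(\<Sum>i. emeasure \<nu> (A i)) = emeasure \<nu> (\<Union>i. A i)"
      using AS A by (intro suminf_emeasure) auto
    have s3: "(\<Sum>i. emeasure \<kappa> (A i)) = emeasure \<kappa> (\<Union>i. A i)"
      using AS A by (intro suminf_emeasure) auto
    have s23: "(\<Sum>i. emeasure \<nu> (A i) + emeasure \<kappa> (A i)) = emeasure \<nu> (\<Union>i. A i) + emeasure \<kappa> (\<Union>i. A i)"
      using s2 s3 suminf_add[OF summableI summableI, of "\<lambda>i. emeasure \<nu> (A i)" "\<lambda>i. emeasure \<kappa> (A i)"] by simp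
    have f3: "emeasure \<mu> (\<Union>i. A i) \<noteq> \<infinity>" "emeasure \<nu> (\<Union>i. A i) \<noteq> \<infinity>" "emeasure \<kappa> (\<Union>i. A i) \<noteq> \<infinity>"
      using fin[of "\<Union>i. A i"] A GS by auto
    have "(\<Sum>i. \<rho> (A i)) = (\<Sum>i. emeasure \<nu> (A i) + emeasure \<kappa> (A i)) - (\<Sum>i. emeasure \<mu> (A i))"
      unfolding \<rho>_def
    proof (rule ennreal_suminf_minus)
      show "emeasure \<mu> (A i) \<le> emeasure \<nu> (A i) + emeasure \<kappa> (A i)" for i using Gle A by auto
      show "(\<Sum>i. emeasure \<nu> (A i) + emeasure \<kappa> (A i)) \<noteq> top" using s23 f3 by simp
      show "(\<Sum>i. emeasure \<mu> (A i)) \<noteq> top" using s1 f3 by simp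
    qed
    also have "\<dots> = \<rho> (\<Union> (range A))" unfolding \<rho>_def s23 s1 by simp
    finally show "(\<Sum>i. \<rho> (A i)) = \<rho> (\<Union> (range A))" .
  qed
  obtain \<rho>' where \<rho>': "\<forall>s\<in>G. \<rho>' s = \<rho> s" "measure_space \<Omega> (sigma_sets \<Omega> G) \<rho>'"
    using SR.caratheodory[OF pos ca] by blast
  define R where "R = measure_of \<Omega> (sigma_sets \<Omega> G) \<rho>'"
  have setsR: "sets R = sigma_sets \<Omega> G" unfolding R_def
    by (subst sets_measure_of) (auto simp: sigma_sets_sigma_sets_eq SR.space_closed intro: SR.sets_into_space dest: sigma_sets_into_sp[OF SR.space_closed])
  have spR: "space R = \<Omega>" unfolding R_def
    by (simp add: space_measure_of sigma_sets_into_sp[OF SR.space_closed] subsetI)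
  have eR: "emeasure R A = \<rho>' A" if "A \<in> sigma_sets \<Omega> G" for A
    unfolding R_def using \<rho>'(2) that
    by (intro emeasure_measure_of_sigma) (auto simp: measure_space_def)
  have \<Omega>G: "\<Omega> \<in> G" unfolding G_iff by (intro exI[of _ 0] exI[of _ T]) (auto simp: \<Omega>_def)
  have IS: "Int_stable G" unfolding Int_stable_def using SR.Int by auto
  have key: "emeasure \<mu> A + emeasure R A = emeasure \<nu> A + emeasure \<kappa> A" if "A \<in> sigma_sets \<Omega> G" for A
    using IS SR.space_closed that
  proof (induct rule: sigma_sets_induct_disjoint)
    case (basic A)
    then have "emeasure R A = \<rho> A" using eR \<rho>'(1) GS by auto
    then show ?case unfolding \<rho>_def using Gle[OF basic] fin[of A] basic GS
      by (simp add: le_add_diff_inverse)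
  next
    case empty then show ?case by simp
  next
    case (compl A)
    have A: "A \<in> sets \<mu>" "A \<in> sets \<nu>" "A \<in> sets \<kappa>" "A \<in> sets R" using compl S\<mu> S\<nu> S\<kappa> setsR by auto
    have sub: "A \<subseteq> \<Omega>" using compl sigma_sets_into_sp[OF SR.space_closed] by auto
    have u1: "emeasure \<mu> (\<Omega> - A) + emeasure \<mu> A = emeasure \<mu> \<Omega>"
      using A sp(1) sub by (subst plus_emeasure) (auto simp: Un_absorb1 Un_absorb2)
    have u2: "emeasure \<nu> (\<Omega> - A) + emeasure \<nu> A = emeasure \<nu> \<Omega>"
      using A sp(2) sub by (subst plus_emeasure) (auto simp: Un_absorb1 Un_absorb2)
    have u3: "emeasure \<kappa> (\<Omega> - A) + emeasure \<kappa> A = emeasure \<kappa> \<Omega>"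
      using A sp(3) sub by (subst plus_emeasure) (auto simp: Un_absorb1 Un_absorb2)
    have u4: "emeasure R (\<Omega> - A) + emeasure R A = emeasure R \<Omega>"
      using A spR sub by (subst plus_emeasure) (auto simp: Un_absorb1 Un_absorb2)
    have PO: "emeasure \<mu> \<Omega> + emeasure R \<Omega> = emeasure \<nu> \<Omega> + emeasure \<kappa> \<Omega>"
    proof -
      have "emeasure R \<Omega> = \<rho> \<Omega>" using eR \<rho>'(1) GS \<Omega>G by auto
      then show ?thesis unfolding \<rho>_def using Gle[OF \<Omega>G] fin[of \<Omega>] \<Omega>G GS
        by (simp add: le_add_diff_inverse)
    qed
    have finA: "emeasure \<nu> A + emeasure \<kappa> A \<noteq> \<infinity>" using fin[of A] compl by auto
    have e1: "(emeasure \<mu> (\<Omega> - A) + emeasure R (\<Omega> - A)) + (emeasure \<mu> A + emeasure R A)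
        = (emeasure \<mu> (\<Omega> - A) + emeasure \<mu> A) + (emeasure R (\<Omega> - A) + emeasure R A)"
      by (simp add: ac_simps)
    have e2: "(emeasure \<nu> (\<Omega> - A) + emeasure \<kappa> (\<Omega> - A)) + (emeasure \<nu> A + emeasure \<kappa> A)
        = (emeasure \<nu> (\<Omega> - A) + emeasure \<nu> A) + (emeasure \<kappa> (\<Omega> - A) + emeasure \<kappa> A)"
      by (simp add: ac_simps)
    have "(emeasure \<mu> (\<Omega> - A) + emeasure R (\<Omega> - A)) + (emeasure \<nu> A + emeasure \<kappa> A)
        = (emeasure \<nu> (\<Omega> - A) + emeasure \<kappa> (\<Omega> - A)) + (emeasure \<nu> A + emeasure \<kappa> A)"
      using e1 e2 u1 u2 u3 u4 PO compl(2) by simp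
    then show ?case using finA ennreal_add_left_cancel[of "emeasure \<nu> A + emeasure \<kappa> A"]
      by (simp add: add.commute[of _ "emeasure \<nu> A + emeasure \<kappa> A"])
  next
    case (union A)
    have AS: "range A \<subseteq> sets \<mu>" "range A \<subseteq> sets \<nu>" "range A \<subseteq> sets \<kappa>" "range A \<subseteq> sets R"
      using union S\<mu> S\<nu> S\<kappa> setsR by auto
    have e: "emeasure M (\<Union>i. A i) = (\<Sum>i. emeasure M (A i))" if "range A \<subseteq> sets M" for M :: "real measure"
      using that union(1) by (intro suminf_emeasure[symmetric]) auto
    have "emeasure \<mu> (\<Union>i. A i) + emeasure R (\<Union>i. A i) = (\<Sum>i. emeasure \<mu> (A i) + emeasure R (A i))"
      using e[OF AS(1)] e[OF AS(4)] suminf_add[OF summableI summableI] by simp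
    also have "\<dots> = (\<Sum>i. emeasure \<nu> (A i) + emeasure \<kappa> (A i))" using union(3) by simp
    also have "\<dots> = (\<Sum>i. emeasure \<nu> (A i)) + (\<Sum>i. emeasure \<kappa> (A i))"
      by (rule suminf_add[OF summableI summableI, symmetric])
    also have "\<dots> = emeasure \<nu> (\<Union>i. A i) + emeasure \<kappa> (\<Union>i. A i)"
      using e[OF AS(2)] e[OF AS(3)] by simp
    finally show ?case .
  qed
  have "emeasure \<mu> E \<le> emeasure \<mu> E + emeasure R E" by simp
  also have "\<dots> = emeasure \<nu> E + emeasure \<kappa> E" using key E S\<mu> by auto
  finally show ?thesis .
qed


locale S7 =
  fixes T C :: real and f g :: "real \<Rightarrow> real"
  assumes T: "T > 0"
    and f_mono: "mono_on {0<..<T} f"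
    and f_lc: "\<forall>t\<in>{0<..<T}. (f \<longlongrightarrow> f t) (at_left t)"
    and g_lc: "\<forall>t\<in>{0<..<T}. (g \<longlongrightarrow> g t) (at_left t)"
    and g_bdd: "bounded (g ` {0<..<T})"
    and fg: "\<forall>t\<in>{0<..<T}. f t \<ge> g t"
    and C: "C > 0"
    and i: "\<forall>\<epsilon>>0. \<forall>t\<in>{0<..<T}. f t > g t + \<epsilon> \<longrightarrow>
              (\<forall>t'\<in>{0<..<T}. 0 \<le> t' - t \<and> t' - t < \<epsilon> / C \<longrightarrow> f t' = f t \<and> f t' > g t')"
    and iii: "\<forall>a b. {a..<b} \<subseteq> {t\<in>{0<..<T}. f t > g t} \<longrightarrow>
               (\<forall>t1 t2. a \<le> t1 \<and> t1 < t2 \<and> t2 < b \<longrightarrow> g t2 - g t1 \<le> C * (t2 - t1))"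
begin

definition "U = {t\<in>{0<..<T}. f t > g t}"
definition "Z = {t\<in>{0<..<T}. f t = g t}"

lemma UZ: "t \<in> {0<..<T} \<Longrightarrow> t \<in> U \<or> t \<in> Z" "t \<in> U \<Longrightarrow> t \<notin> Z"
  "t \<in> U \<Longrightarrow> t \<in> {0<..<T}" "t \<in> Z \<Longrightarrow> t \<in> {0<..<T}"
  using fg by (auto simp: U_def Z_def less_le)

lemma fmono: "0 < x \<Longrightarrow> x \<le> y \<Longrightarrow> y < T \<Longrightarrow> f x \<le> f y"
  using f_mono by (auto simp: mono_on_def)

lemma L1:
  assumes t: "t \<in> U"
  shows "\<exists>\<delta>>0. t + \<delta> \<le> T \<and> (\<forall>t'. t \<le> t' \<and> t' < t + \<delta> \<longrightarrow> f t' = f t \<and> t' \<in> U)"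
proof -
  define e where "e = (f t - g t) / 2"
  have t0: "0 < t" "t < T" "g t < f t" using t by (auto simp: U_def)
  have e: "e > 0" "f t > g t + e" using t0 by (auto simp: e_def field_simps)
  define d where "d = min (e / C) (T - t)"
  have d: "d > 0" using e C t0 by (auto simp: d_def)
  show ?thesis
  proof (intro exI[of _ d] conjI allI impI)
    show "0 < d" "t + d \<le> T" using d by (auto simp: d_def)
    fix t' assume t': "t \<le> t' \<and> t' < t + d"
    then have t'T: "t' \<in> {0<..<T}" using t0 by (auto simp: d_def)
    have "0 \<le> t' - t \<and> t' - t < e / C" using t' by (auto simp: d_def)
    then have "f t' = f t \<and> f t' > g t'" using i[rule_format, OF e(1) _ e(2) t'T] t0 by auto
    then show "f t' = f t" "t' \<in> U" using t'T by (auto simp: U_def)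
  qed
qed

lemma L2:
  assumes xy: "0 < x" "x \<le> y" "y < T" and sub: "{x..<y} \<subseteq> U"
  shows "f y = f x"
proof -
  define S where "S = {z\<in>{x..y}. f z = f x}"
  define w where "w = Sup S"
  have Sne: "S \<noteq> {}" "x \<in> S" using xy by (auto simp: S_def)
  have Sbdd: "bdd_above S" by (auto simp: S_def bdd_above_def)
  have w: "x \<le> w" "w \<le> y" using Sne Sbdd unfolding w_def
    by (auto intro!: cSup_upper cSup_least simp: S_def)
  have A: "f z = f x" if z: "x \<le> z" "z < w" for z
  proof -
    obtain s where s: "s \<in> S" "z < s" using less_cSup_iff[OF Sne(1) Sbdd] z by (auto simp: w_def)
    have "f x \<le> f z" using fmono[of x z] xy z w by auto
    moreover have "f z \<le> f s"
    proof -
      have "s \<le> y" using s by (auto simp: S_def)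
      then show ?thesis using fmono[of z s] xy z s by auto
    qed
    ultimately show ?thesis using s by (auto simp: S_def)
  qed
  have B: "f w = f x"
  proof (cases "w = x")
    case False
    then have xw: "x < w" using w by auto
    have wT: "w \<in> {0<..<T}" using w xy by auto
    have lim: "(f \<longlongrightarrow> f w) (at_left w)" using f_lc wT by auto
    have ev: "eventually (\<lambda>z. f z = f x) (at_left w)"
      using eventually_at_left_real[OF xw] by (rule eventually_mono) (auto intro: A)
    have "((\<lambda>_. f x) \<longlongrightarrow> f w) (at_left w)"
      using Lim_transform_eventually[OF lim ev] .
    from tendsto_unique[OF trivial_limit_at_left_real this tendsto_const] show ?thesis by simp
  qed simp
  have C: "w = y"
  proof (rule ccontr)
    assume "w \<noteq> y"
    then have wy: "w < y" using w by auto
    then have "w \<in> U" using sub w by auto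
    from L1[OF this] obtain d where d: "d > 0" "\<forall>t'. w \<le> t' \<and> t' < w + d \<longrightarrow> f t' = f w \<and> t' \<in> U"
      by blast
    define z where "z = min (w + d/2) y"
    have "z \<in> S" using d B w wy by (auto simp: S_def z_def)
    then have "z \<le> w" unfolding w_def using Sbdd by (rule cSup_upper)
    then show False using d wy by (auto simp: z_def)
  qed
  show ?thesis using B C by simp
qed

lemma L3:
  assumes ab: "0 < a" "a \<le> b" "b < T" and ne: "Z \<inter> {a..b} \<noteq> {}"
  shows "\<exists>q\<in>{a..b}. q \<in> Z \<and> {a..<q} \<subseteq> U"
proof -
  define q where "q = Inf (Z \<inter> {a..b})"
  have bdd: "bdd_below (Z \<inter> {a..b})" by (auto simp: bdd_below_def)
  have q: "a \<le> q" "q \<le> b" using ne bdd by (auto simp: q_def intro: cInf_greatest cInf_lower2)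
  have qZ: "q \<in> Z"
  proof (rule ccontr)
    assume "q \<notin> Z"
    moreover have "q \<in> {0<..<T}" using q ab by auto
    ultimately have "q \<in> U" using UZ(1) by blast
    from L1[OF this] obtain d where d: "d > 0" "\<forall>t'. q \<le> t' \<and> t' < q + d \<longrightarrow> f t' = f q \<and> t' \<in> U"
      by blast
    have "Inf (Z \<inter> {a..b}) < q + d" using d by (simp add: q_def)
    then obtain z where z: "z \<in> Z \<inter> {a..b}" "z < q + d" using cInf_less_iff[OF ne bdd] by auto
    have "q \<le> z" using z bdd by (auto simp: q_def intro: cInf_lower)
    then have "z \<in> U" using d z by auto
    then show False using z UZ(2) by auto
  qed
  have "{a..<q} \<subseteq> U"
  proof
    fix z assume z: "z \<in> {a..<q}"
    show "z \<in> U"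
    proof (rule ccontr)
      assume "z \<notin> U"
      then have "z \<in> Z \<inter> {a..b}" using UZ(1)[of z] z q ab by auto
      then have "q \<le> z" using bdd by (auto simp: q_def intro: cInf_lower)
      then show False using z by auto
    qed
  qed
  then show ?thesis using qZ q by auto
qed

lemma L4:
  assumes ab: "0 < a" "a \<le> b" "b < T" and ne: "Z \<inter> {a..b} \<noteq> {}"
  shows "\<exists>r\<in>{a..b}. r \<in> Z \<and> {r<..b} \<subseteq> U"
proof -
  define r where "r = Sup (Z \<inter> {a..b})"
  have bdd: "bdd_above (Z \<inter> {a..b})" by (auto simp: bdd_above_def)
  have r: "a \<le> r" "r \<le> b" using ne bdd by (auto simp: r_def intro: cSup_least cSup_upper2)
  have rZ: "r \<in> Z"
  proof (rule ccontr)
    assume rnZ: "r \<notin> Z"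
    moreover have "r \<in> {0<..<T}" using r ab by auto
    ultimately have "r \<in> U" using UZ(1) by blast
    then have pos: "f r - g r > 0" and rT: "r \<in> {0<..<T}" by (auto simp: U_def)
    have lim: "((\<lambda>z. f z - g z) \<longlongrightarrow> f r - g r) (at_left r)"
      using f_lc g_lc rT by (auto intro: tendsto_diff)
    have "eventually (\<lambda>z. f z - g z > 0) (at_left r)"
      using order_tendstoD(1)[OF lim pos] .
    then obtain b' where b': "b' < r" "\<forall>z>b'. z < r \<longrightarrow> f z - g z > 0"
      unfolding eventually_at_left_field by blast
    have "b' < Sup (Z \<inter> {a..b})" using b' by (simp add: r_def)
    then obtain z where z: "z \<in> Z \<inter> {a..b}" "b' < z" using less_cSup_iff[OF ne bdd] by auto
    have "z \<le> r" using z bdd by (auto simp: r_def intro: cSup_upper)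
    moreover have "z \<noteq> r" using z rnZ by auto
    ultimately have "f z - g z > 0" using b' z by auto
    then show False using z by (auto simp: Z_def)
  qed
  have "{r<..b} \<subseteq> U"
  proof
    fix z assume z: "z \<in> {r<..b}"
    show "z \<in> U"
    proof (rule ccontr)
      assume "z \<notin> U"
      then have "z \<in> Z \<inter> {a..b}" using UZ(1)[of z] z r ab by auto
      then have "z \<le> r" using bdd by (auto simp: r_def intro: cSup_upper)
      then show False using z by auto
    qed
  qed
  then show ?thesis using rZ r by auto
qed

end

lemma part_mono:
  assumes P: "is_partition a b m t" and ij: "i \<le> j" "j \<le> m"
  shows "t i \<le> t j"
  using ij
proof (induction j)
  case 0 then show ?case by simp
next
  case (Suc j)
  show ?case
  proof (cases "i = Suc j")
    case False
    then have "t i \<le> t j" using Suc by auto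
    moreover have "t j < t (Suc j)" using P Suc(3) by (auto simp: is_partition_def)
    ultimately show ?thesis by simp
  qed simp
qed

lemma part_range:
  assumes P: "is_partition a b m t" and i: "i \<le> m"
  shows "a \<le> t i \<and> t i \<le> b"
  using part_mono[OF P, of 0 i] part_mono[OF P, of i m] P i by (auto simp: is_partition_def)

lemma pos_var_refl: "pos_var g a a = 0"
proof -
  have "{(\<Sum>i\<in>{1..m}. max (g (t i) - g (t (i - 1))) 0) | m t. is_partition a a m t} = {0}"
  proof (safe)
    fix m t assume P: "is_partition a a m t"
    have "m = 0"
    proof (rule ccontr)
      assume "m \<noteq> 0"
      then have "t 0 < t 1" "t 1 \<le> t m" using P part_mono[OF P, of 1 m] by (auto simp: is_partition_def)
      then show False using P by (auto simp: is_partition_def)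
    qed
    then show "(\<Sum>i\<in>{1..m}. max (g (t i) - g (t (i - 1))) 0) = 0" by simp
  next
    show "\<exists>m t. 0 = (\<Sum>i\<in>{1..m}. max (g (t i) - g (t (i - 1))) 0) \<and> is_partition a a m t"
      by (intro exI[of _ 0] exI[of _ "\<lambda>_. a"]) (simp add: is_partition_def)
  qed
  then show ?thesis by (simp add: pos_var_def)
qed

locale S7B = S7 +
  fixes Dgp :: "real measure"
  assumes g_bv: "bounded_variation_on g {0<..<T}"
    and Dgp_sets: "sets Dgp = sets (restrict_space borel {0<..<T})"
    and Dgp_int: "\<forall>a b. 0 < a \<and> a < b \<and> b < T \<longrightarrow> emeasure Dgp {a..<b} = ennreal (pos_var g a b)"
    and ii: "\<forall>t\<in>{0<..<T}. Lim (at_right t) f - f t = max (Lim (at_right t) g - g t) 0"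
begin

definition "PS a b = {(\<Sum>i\<in>{1..m}. max (g (t i) - g (t (i - 1))) 0) | m t. is_partition a b m t}"

lemma PV_def': "pos_var g a b = Sup (PS a b)"
  by (simp add: pos_var_def PS_def)

lemma PV_bdd:
  assumes "0 < a" "b < T"
  shows "bdd_above (PS a b)"
proof -
  obtain B where B: "\<forall>m t. (\<forall>i\<le>m. t i \<in> {0<..<T}) \<and> (\<forall>i<m. t i < t (Suc i)) \<longrightarrow>
          (\<Sum>i\<in>{1..m}. \<bar>g (t i) - g (t (i - 1))\<bar>) \<le> B"
    using g_bv unfolding bounded_variation_on_def by blast
  show ?thesis unfolding bdd_above_def
  proof (intro exI ballI)
    fix x assume "x \<in> PS a b"
    then obtain m t where x: "x = (\<Sum>i\<in>{1..m}. max (g (t i) - g (t (i - 1))) 0)" and P: "is_partition a b m t"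
      by (auto simp: PS_def)
    have "x \<le> (\<Sum>i\<in>{1..m}. \<bar>g (t i) - g (t (i - 1))\<bar>)" unfolding x by (intro sum_mono) auto
    also have "\<dots> \<le> B"
    proof -
      have "\<forall>i\<le>m. t i \<in> {0<..<T}" using part_range[OF P] assms by force
      moreover have "\<forall>i<m. t i < t (Suc i)" using P by (auto simp: is_partition_def)
      ultimately show ?thesis using B by blast
    qed
    finally show "x \<le> B" .
  qed
qed

lemma PV_ge:
  assumes "0 < a" "a < b" "b < T"
  shows "max (g b - g a) 0 \<le> pos_var g a b"
proof -
  have "max (g b - g a) 0 \<in> PS a b"
    unfolding PS_def
    by (rule CollectI, intro exI[of _ 1] exI[of _ "\<lambda>i. if i = 0 then a else b"]) (use assms in \<open>auto simp: is_partition_def\<close>)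
  then show ?thesis unfolding PV_def' using PV_bdd assms by (intro cSup_upper) auto
qed

lemma PV_nonneg:
  assumes "0 < a" "a \<le> b" "b < T"
  shows "0 \<le> pos_var g a b"
proof (cases "a = b")
  case True then show ?thesis by (simp add: pos_var_refl)
next
  case False then show ?thesis using PV_ge[of a b] assms by linarith
qed

lemma sets_sub: "X \<in> sets borel \<Longrightarrow> X \<subseteq> {0<..<T} \<Longrightarrow> X \<in> sets (restrict_space borel {0<..<T})"
  by (subst sets_restrict_space_iff) auto

lemma PV_add:
  assumes "0 < a" "a \<le> c" "c \<le> b" "b < T"
  shows "pos_var g a b = pos_var g a c + pos_var g c b"
proof (cases "a = c \<or> c = b")
  case True then show ?thesis by (auto simp: pos_var_refl)
next
  case False
  then have acb: "a < c" "c < b" using assms by auto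
  have S: "{a..<c} \<in> sets Dgp" "{c..<b} \<in> sets Dgp" unfolding Dgp_sets using assms acb
    by (auto intro!: sets_sub)
  have "emeasure Dgp {a..<c} + emeasure Dgp {c..<b} = emeasure Dgp ({a..<c} \<union> {c..<b})"
    using S by (intro plus_emeasure) auto
  also have "{a..<c} \<union> {c..<b} = {a..<b}" using acb by auto
  finally have "ennreal (pos_var g a c) + ennreal (pos_var g c b) = ennreal (pos_var g a b)"
    using Dgp_int assms acb by auto
  then have "ennreal (pos_var g a c + pos_var g c b) = ennreal (pos_var g a b)"
    using PV_nonneg[of a c] PV_nonneg[of c b] assms acb by simp
  then show ?thesis
    using PV_nonneg[of a c] PV_nonneg[of c b] PV_nonneg[of a b] assms acb by (subst (asm) ennreal_inj) auto
qed

lemma PV_mono: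
  assumes "0 < a" "a \<le> c" "c \<le> d" "d \<le> b" "b < T"
  shows "pos_var g c d \<le> pos_var g a b"
  using PV_add[of a c b] PV_add[of c d b] PV_nonneg[of a c] PV_nonneg[of d b] assms by auto

lemma PV_ge':
  assumes "0 < a" "a \<le> b" "b < T"
  shows "g b - g a \<le> pos_var g a b"
proof (cases "a = b")
  case True then show ?thesis by (simp add: pos_var_refl)
next
  case False then show ?thesis using PV_ge[of a b] assms by linarith
qed

lemma RL:
  assumes r: "0 < r" "r < b" "b < T" and sub: "{r<..b} \<subseteq> U"
  shows "\<exists>L. (g \<longlongrightarrow> L) (at_right r)"
proof -
  define h where "h t = g t - C * t" for t
  have hmono: "h t2 \<le> h t1" if "r < t1" "t1 < t2" "t2 < b" for t1 t2
  proof -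
    have "{t1..<b} \<subseteq> U" using sub that by auto
    then have "{t1..<b} \<subseteq> {t\<in>{0<..<T}. f t > g t}" by (simp add: U_def)
    then have "g t2 - g t1 \<le> C * (t2 - t1)" using iii that by blast
    then show ?thesis by (simp add: h_def algebra_simps)
  qed
  obtain M where M: "\<forall>t\<in>{0<..<T}. \<bar>g t\<bar> \<le> M" using g_bdd unfolding bounded_iff by auto
  define H where "H = h ` {r<..<b}"
  have Hne: "H \<noteq> {}" using r by (auto simp: H_def)
  have Hbdd: "bdd_above H" unfolding bdd_above_def H_def
  proof (intro exI ballI)
    fix y assume "y \<in> h ` {r<..<b}"
    then obtain t where t: "t \<in> {r<..<b}" "y = h t" by auto
    have "t \<in> {0<..<T}" using t r by auto
    then have "\<bar>g t\<bar> \<le> M" using M by blast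
    then have "g t \<le> M" by simp
    moreover have "C * r \<le> C * t" using C t by auto
    ultimately show "y \<le> M - C * r" using t by (simp add: h_def)
  qed
  define L0 where "L0 = Sup H"
  have hlim: "(h \<longlongrightarrow> L0) (at_right r)"
  proof (rule order_tendstoI)
    fix y assume "y < L0"
    then obtain s where s: "s \<in> H" "y < s" using less_cSup_iff[OF Hne Hbdd] by (auto simp: L0_def)
    then obtain u where u: "u \<in> {r<..<b}" "s = h u" by (auto simp: H_def)
    show "eventually (\<lambda>t. y < h t) (at_right r)"
      unfolding eventually_at_right_field
    proof (intro exI[of _ u] conjI allI impI)
      show "r < u" using u by auto
      fix t assume "r < t" "t < u"
      then have "h u \<le> h t" using hmono[of t u] u by auto
      then show "y < h t" using s u by auto
    qed
  next
    fix y assume "L0 < y"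
    show "eventually (\<lambda>t. h t < y) (at_right r)"
      unfolding eventually_at_right_field
    proof (intro exI[of _ b] conjI allI impI)
      show "r < b" using r by simp
      fix t assume "r < t" "t < b"
      then have "h t \<in> H" by (auto simp: H_def)
      then have "h t \<le> L0" unfolding L0_def using Hbdd by (rule cSup_upper)
      then show "h t < y" using \<open>L0 < y\<close> by simp
    qed
  qed
  have "((\<lambda>t. h t + C * t) \<longlongrightarrow> L0 + C * r) (at_right r)"
    by (intro tendsto_intros hlim)
  then have "(g \<longlongrightarrow> L0 + C * r) (at_right r)" by (simp add: h_def)
  then show ?thesis by blast
qed


lemma A_ineq:
  assumes ab: "0 < a" "a < b" "b < T"
  shows "f b - f a \<le> pos_var g a b"
proof (cases "Z \<inter> {a..b} = {}")
  case True
  have "{a..<b} \<subseteq> U"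
  proof
    fix x assume x: "x \<in> {a..<b}"
    then have "x \<in> {0<..<T}" "x \<notin> Z" using ab True by auto
    then show "x \<in> U" using UZ(1) by blast
  qed
  then have "f b = f a" using L2[of a b] ab by auto
  then show ?thesis using PV_nonneg[of a b] ab by simp
next
  case False
  obtain q where q: "q \<in> {a..b}" "q \<in> Z" "{a..<q} \<subseteq> U" using L3[OF ab(1) less_imp_le[OF ab(2)] ab(3) False] by blast
  obtain r where r: "r \<in> {a..b}" "r \<in> Z" "{r<..b} \<subseteq> U" using L4[OF ab(1) less_imp_le[OF ab(2)] ab(3) False] by blast
  have qr: "q \<le> r"
  proof (rule ccontr)
    assume "\<not> q \<le> r"
    then have "r \<in> {a..<q}" using r(1) by auto
    then have "r \<in> U" using q(3) by blast
    then show False using r(2) UZ(2) by blast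
  qed
  have qa: "a \<le> q" "q \<le> b" "a \<le> r" "r \<le> b" using q(1) r(1) by auto
  have q0: "0 < q" and rT: "r < T" using qa ab by linarith+
  have fq: "f q = f a" using L2[OF ab(1) qa(1) _ q(3)] qa ab by linarith
  have Zq: "f q = g q" and Zr: "f r = g r" using q(2) r(2) by (auto simp: Z_def)
  have base: "g r - g q \<le> pos_var g a b"
  proof -
    have "g r - g q \<le> pos_var g q r" by (rule PV_ge'[OF q0 qr rT])
    moreover have "pos_var g q r \<le> pos_var g a b" by (rule PV_mono[OF ab(1) qa(1) qr qa(4) ab(3)])
    ultimately show ?thesis by linarith
  qed
  show ?thesis
  proof (cases "r = b")
    case True then show ?thesis using base fq Zq Zr by simp
  next
    case False
    then have rb: "r < b" using qa(4) by linarith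
    have r0: "0 < r" using qa(3) ab(1) by linarith
    have fconst: "f x = f b" if "x \<in> {r<..b}" for x
    proof -
      have "{x..<b} \<subseteq> {r<..b}" using that by auto
      then have "{x..<b} \<subseteq> U" using r(3) by blast
      moreover have x0: "0 < x" "x \<le> b" using that r0 by auto
      ultimately show ?thesis using L2[OF x0 ab(3)] by simp
    qed
    have flim: "(f \<longlongrightarrow> f b) (at_right r)"
    proof (rule Lim_transform_eventually[OF tendsto_const])
      show "eventually (\<lambda>x. f b = f x) (at_right r)"
        unfolding eventually_at_right_field
      proof (intro exI[of _ b] conjI allI impI)
        show "r < b" by (rule rb)
        fix y assume "r < y" "y < b"
        then show "f b = f y" using fconst[of y] by simp
      qed
    qed
    obtain Lg where glim: "(g \<longlongrightarrow> Lg) (at_right r)" using RL[OF r0 rb ab(3) r(3)] by blast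
    have "Lim (at_right r) f = f b" using tendsto_Lim[OF trivial_limit_at_right_real flim] .
    moreover have "Lim (at_right r) g = Lg" using tendsto_Lim[OF trivial_limit_at_right_real glim] .
    moreover have "r \<in> {0<..<T}" using r0 rT by auto
    ultimately have jump: "f b - f r = max (Lg - g r) 0" using ii[rule_format, of r] by simp
    have eq: "f b - f a = (g r - g q) + max (Lg - g r) 0" using jump fq Zq Zr by simp
    show ?thesis
    proof (cases "Lg \<le> g r")
      case True then show ?thesis using eq base by simp
    next
      case False
      show ?thesis
      proof (rule field_le_epsilon)
        fix e :: real assume e: "0 < e"
        have "eventually (\<lambda>x. Lg - e < g x) (at_right r)"
          using order_tendstoD(1)[OF glim] e by simp
        then obtain b' where b': "b' > r" "\<forall>y>r. y < b' \<longrightarrow> Lg - e < g y"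
          unfolding eventually_at_right_field by blast
        define x where "x = (r + min b' b) / 2"
        have x: "r < x" "x < b'" "x < b" using b' rb by (auto simp: x_def)
        have gx: "Lg - e < g x" using b' x by auto
        have xT: "x < T" using x ab by linarith
        have rx: "r \<le> x" using x by linarith
        have "g x - g r \<le> pos_var g r x" by (rule PV_ge'[OF r0 rx xT])
        moreover have "g r - g q \<le> pos_var g q r" by (rule PV_ge'[OF q0 qr rT])
        moreover have "pos_var g q x = pos_var g q r + pos_var g r x" by (rule PV_add[OF q0 qr rx xT])
        moreover have "pos_var g q x \<le> pos_var g a b"
          using PV_mono[OF ab(1) qa(1) _ _ ab(3), of x] qr rx x by linarith
        ultimately show "f b - f a \<le> pos_var g a b + e" using eq gx False by simp
      qed
    qed
  qed
qed

end

context S7 begin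

definition "J q = {x. x < q \<and> {x..q} \<subseteq> U}"

lemma J_interval: "is_interval (J q)"
  unfolding is_interval_1 J_def by (auto simp: subset_eq)

lemma J_sub: "J q \<subseteq> U"
  unfolding J_def by auto

lemma U_UN: "U = (\<Union>q\<in>\<rat>. J q)"
proof
  show "(\<Union>q\<in>\<rat>. J q) \<subseteq> U" using J_sub by auto
  show "U \<subseteq> (\<Union>q\<in>\<rat>. J q)"
  proof
    fix t assume t: "t \<in> U"
    from L1[OF t] obtain d where d: "d > 0" "t + d \<le> T" "\<forall>t'. t \<le> t' \<and> t' < t + d \<longrightarrow> f t' = f t \<and> t' \<in> U"
      by blast
    obtain q where q: "q \<in> \<rat>" "t < q" "q < t + d" using Rats_dense_in_real[of t "t + d"] d by auto
    have "{t..q} \<subseteq> U" using d q by auto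
    then have "t \<in> J q" using q by (auto simp: J_def)
    then show "t \<in> (\<Union>q\<in>\<rat>. J q)" using q by auto
  qed
qed

lemma J_borel: "J q \<in> sets borel"
  by (rule real_interval_borel_measurable[OF J_interval])

lemma U_borel: "U \<in> sets borel"
  unfolding U_UN using J_borel countable_rat by (intro sets.countable_UN'') auto

lemma U_sub: "U \<subseteq> {0<..<T}" by (auto simp: U_def)

lemma J_const: "x \<in> J q \<Longrightarrow> f x = f q \<and> q < T \<and> 0 < x"
proof -
  assume x: "x \<in> J q"
  then have xq: "x < q" "{x..q} \<subseteq> U" by (auto simp: J_def)
  then have "q \<in> U" "x \<in> U" by auto
  then have qT: "q < T" "0 < x" using U_sub by auto
  have "{x..<q} \<subseteq> U" using xq by auto
  then have "f q = f x" using L2[of x q] xq qT by auto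
  then show ?thesis using qT by simp
qed

end

locale S7C = S7 +
  fixes Df :: "real measure"
  assumes Df_sets: "sets Df = sets (restrict_space borel {0<..<T})"
    and Df_int: "\<forall>a b. 0 < a \<and> a < b \<and> b < T \<longrightarrow> emeasure Df {a..<b} = ennreal (f b - f a)"
begin

lemma sets_Df: "X \<in> sets borel \<Longrightarrow> X \<subseteq> {0<..<T} \<Longrightarrow> X \<in> sets Df"
  unfolding Df_sets by (subst sets_restrict_space_iff) auto

lemma J_null: "emeasure Df (J q) = 0"
proof (cases "J q = {}")
  case True then show ?thesis by simp
next
  case False
  have JS: "J q \<in> sets Df" using J_borel J_sub U_sub by (intro sets_Df) auto
  have bdd: "bdd_below (J q)" unfolding bdd_below_def using J_const by (intro exI[of _ 0]) (auto simp: less_imp_le)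
  define s where "s = Inf (J q)"
  have Jlt: "x < q" if "x \<in> J q" for x using that by (auto simp: J_def)
  have Ico0: "emeasure Df {x..<q} = 0" if "x \<in> J q" for x
  proof -
    have "0 < x" "x < q" "q < T" "f x = f q" using J_const[OF that] Jlt[OF that] by auto
    then show ?thesis using Df_int by simp
  qed
  show ?thesis
  proof (cases "s \<in> J q")
    case True
    have "J q \<subseteq> {s..<q}" using Jlt bdd by (auto simp: s_def intro: cInf_lower)
    then have "emeasure Df (J q) \<le> emeasure Df {s..<q}"
      using JS J_const[OF True] Jlt[OF True] by (intro emeasure_mono sets_Df) auto
    then show ?thesis using Ico0[OF True] by simp
  next
    case sJ: False
    have ex: "\<exists>x\<in>J q. x < s + 1 / Suc n" for n :: nat
      using cInf_less_iff[OF False bdd, of "s + 1 / Suc n"] by (simp add: s_def)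
    then obtain xn where xn: "\<And>n. xn n \<in> J q" "\<And>n. xn n < s + 1 / Suc n" by metis
    have cover: "J q \<subseteq> (\<Union>n. {xn n..<q})"
    proof
      fix x assume x: "x \<in> J q"
      have "s \<le> x" using x bdd by (auto simp: s_def intro: cInf_lower)
      then have sx: "s < x" using sJ x by (cases "s = x") auto
      obtain n :: nat where n: "1 / (x - s) < real n" using reals_Archimedean2 by blast
      have "1 / Suc n < x - s"
      proof -
        have "1 < real n * (x - s)" using n sx by (simp add: field_simps)
        also have "\<dots> < real (Suc n) * (x - s)" using sx by (simp add: mult_strict_right_mono)
        finally show ?thesis by (simp add: field_simps)
      qed
      then have "xn n \<le> x" using xn(2)[of n] by simp
      then show "x \<in> (\<Union>n. {xn n..<q})" using Jlt[OF x] by auto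
    qed
    have sets_n: "{xn n..<q} \<in> sets Df" for n
      using J_const[OF xn(1)[of n]] Jlt[OF xn(1)[of n]] by (intro sets_Df) auto
    have "emeasure Df (\<Union>n. {xn n..<q}) = 0"
      using Ico0[OF xn(1)] sets_n by (intro emeasure_UN_eq_0) auto
    moreover have "emeasure Df (J q) \<le> emeasure Df (\<Union>n. {xn n..<q})"
      using cover sets_n by (intro emeasure_mono) auto
    ultimately show ?thesis by simp
  qed
qed

lemma U_null: "emeasure Df U = 0"
proof -
  have "J q \<in> null_sets Df" for q
  proof -
    have "J q \<in> sets Df" using J_borel J_sub U_sub by (intro sets_Df) auto
    then show ?thesis using J_null by (simp add: null_sets_def)
  qed
  then have "(\<Union>q\<in>\<rat>. J q) \<in> null_sets Df"
    using countable_rat by (intro null_sets_UN') auto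
  then show ?thesis unfolding U_UN[symmetric] by auto
qed

end

context S7 begin

definition "lam X = measure lborel X"

lemma lam_Ico_fin: "emeasure lborel ({a..<b} \<inter> U) \<noteq> \<infinity>"
proof -
  have "emeasure lborel ({a..<b} \<inter> U) \<le> emeasure lborel {a..<b}"
    using U_borel by (intro emeasure_mono) auto
  moreover have "emeasure lborel {a..<b::real} < \<infinity>"
    by (cases "a \<le> b") auto
  ultimately show ?thesis by (auto simp: top_unique)
qed

lemma lam_nonneg: "0 \<le> lam X" by (simp add: lam_def)

lemma lam_split:
  assumes "a \<le> c" "c \<le> b"
  shows "lam ({a..<b} \<inter> U) = lam ({a..<c} \<inter> U) + lam ({c..<b} \<inter> U)"
proof -
  have "{a..<b} \<inter> U = ({a..<c} \<inter> U) \<union> ({c..<b} \<inter> U)" using assms by auto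
  then show ?thesis unfolding lam_def using U_borel lam_Ico_fin
    by (simp add: measure_Union) (subst measure_Union, auto)
qed

lemma B_pair:
  assumes ss: "0 < s" "s < s'" "s' < T"
  shows "g s' - g s \<le> f s' - f s + C * lam ({s..<s'} \<inter> U)"
proof -
  have sT: "s \<in> {0<..<T}" "s' \<in> {0<..<T}" using ss by auto
  have gf': "g s' \<le> f s'" using fg sT by auto
  have Cl: "0 \<le> C * lam ({s..<s'} \<inter> U)" using mult_nonneg_nonneg[OF less_imp_le[OF C] lam_nonneg] .
  have lam_ge: "q - s \<le> lam ({s..<s'} \<inter> U)" if "s \<le> q" "q \<le> s'" "{s..<q} \<subseteq> U" for q
  proof -
    have "lam {s..<q} \<le> lam ({s..<s'} \<inter> U)" unfolding lam_def
      using that lam_Ico_fin[of s s'] U_borel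
      by (intro measure_mono_fmeasurable) (auto simp: fmeasurable_def less_top)
    then show ?thesis using that by (simp add: lam_def)
  qed
  show ?thesis
  proof (cases "s \<in> Z")
    case True
    then have "g s = f s" by (simp add: Z_def)
    then show ?thesis using gf' Cl by simp
  next
    case sZ: False
    then have sU: "s \<in> U" using UZ(1) sT by blast
    have fss: "f s \<le> f s'" using fmono ss by simp
    show ?thesis
    proof (cases "Z \<inter> {s..s'} = {}")
      case True
      have sub: "{s..s'} \<subseteq> U"
      proof
        fix x assume x: "x \<in> {s..s'}"
        then have "x \<in> {0<..<T}" "x \<notin> Z" using ss True by auto
        then show "x \<in> U" using UZ(1) by blast
      qed
      then have "s' \<in> U" using ss by auto
      from L1[OF this] obtain d where d: "d > 0" "\<forall>t'. s' \<le> t' \<and> t' < s' + d \<longrightarrow> f t' = f s' \<and> t' \<in> U"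
        by blast
      have "{s..<s'+d} \<subseteq> U"
      proof
        fix x assume x: "x \<in> {s..<s'+d}"
        show "x \<in> U"
        proof (cases "x \<le> s'")
          case True then show ?thesis using sub x by auto
        next
          case False then show ?thesis using d x by auto
        qed
      qed
      then have "{s..<s'+d} \<subseteq> {t\<in>{0<..<T}. f t > g t}" by (simp add: U_def)
      then have "g s' - g s \<le> C * (s' - s)" using iii d ss by auto
      moreover have "s' - s \<le> lam ({s..<s'} \<inter> U)"
      proof -
        have "{s..<s'} \<subseteq> U" using sub by auto
        then show ?thesis using lam_ge[of s'] ss by auto
      qed
      ultimately have "g s' - g s \<le> C * lam ({s..<s'} \<inter> U)"
        using C by (smt (verit) mult_left_mono)
      then show ?thesis using fss by simp
    next
      case False
      obtain q where q: "q \<in> {s..s'}" "q \<in> Z" "{s..<q} \<subseteq> U"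
        using L3[OF ss(1) less_imp_le[OF ss(2)] ss(3) False] by blast
      have sq: "s \<le> q" "q \<le> s'" using q(1) by auto
      have sq': "s < q" using sq sZ q(2) by (cases "s = q") auto
      have fq: "f q = f s" using L2[OF ss(1) sq(1) _ q(3)] sq ss by simp
      have Zq: "f q = g q" using q(2) by (simp add: Z_def)
      have qT: "q \<in> {0<..<T}" using sq ss by auto
      have gq: "g q - g s \<le> C * (q - s)"
      proof -
        have lim: "(g \<longlongrightarrow> g q) (at_left q)" using g_lc qT by auto
        have lim2: "((\<lambda>t. g s + C * (t - s)) \<longlongrightarrow> g s + C * (q - s)) (at_left q)"
          by (intro tendsto_intros)
        have ev: "eventually (\<lambda>t. g t \<le> g s + C * (t - s)) (at_left q)"
          unfolding eventually_at_left_field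
        proof (intro exI[of _ s] conjI allI impI)
          show "s < q" by (rule sq')
          fix t assume t: "s < t" "t < q"
          have "{s..<q} \<subseteq> {t\<in>{0<..<T}. f t > g t}" using q(3) by (simp add: U_def)
          then have "g t - g s \<le> C * (t - s)" using iii t by blast
          then show "g t \<le> g s + C * (t - s)" by simp
        qed
        have "g q \<le> g s + C * (q - s)"
          using tendsto_le[OF trivial_limit_at_left_real lim2 lim ev] .
        then show ?thesis by simp
      qed
      moreover have "q - s \<le> lam ({s..<s'} \<inter> U)" using lam_ge[OF sq q(3)] .
      ultimately have "g q - g s \<le> C * lam ({s..<s'} \<inter> U)"
        using C by (smt (verit) mult_left_mono)
      then show ?thesis using gf' fq Zq by simp
    qed
  qed
qed

end

lemma telesc: fixes m :: nat and t :: "nat \<Rightarrow> 'a" shows "(\<Sum>i\<in>{1..m}. F (t i) - F (t (i - 1))) = F (t m) - (F (t 0) :: real)"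
  by (induction m) auto

context S7B begin

lemma B_pv:
  assumes ab: "0 < a" "a < b" "b < T"
  shows "pos_var g a b \<le> f b - f a + C * lam ({a..<b} \<inter> U)"
  unfolding PV_def'
proof (rule cSup_least)
  have "max (g b - g a) 0 \<in> PS a b"
    unfolding PS_def
    by (rule CollectI, intro exI[of _ 1] exI[of _ "\<lambda>i. if i = 0 then a else b"]) (use ab in \<open>auto simp: is_partition_def\<close>)
  then show "PS a b \<noteq> {}" by blast
  fix x assume "x \<in> PS a b"
  then obtain m t where x: "x = (\<Sum>i\<in>{1..m}. max (g (t i) - g (t (i - 1))) 0)" and P: "is_partition a b m t"
    by (auto simp: PS_def)
  define F where "F y = f y + C * lam ({a..<y} \<inter> U)" for y
  have step: "max (g (t i) - g (t (i - 1))) 0 \<le> F (t i) - F (t (i - 1))" if i: "i \<in> {1..m}" for i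
  proof -
    have lt: "t (i - 1) < t i" using P i by (auto simp: is_partition_def) (metis Suc_diff_1 Suc_le_eq diff_less less_one order_less_le_trans)
    have r1: "a \<le> t (i - 1)" "t i \<le> b" using part_range[OF P, of "i - 1"] part_range[OF P, of i] i by auto
    have spl: "lam ({a..<t i} \<inter> U) = lam ({a..<t (i - 1)} \<inter> U) + lam ({t (i - 1)..<t i} \<inter> U)"
      using lam_split[of a "t (i - 1)" "t i"] r1 lt by auto
    have "g (t i) - g (t (i - 1)) \<le> f (t i) - f (t (i - 1)) + C * lam ({t (i - 1)..<t i} \<inter> U)"
      using B_pair[of "t (i - 1)" "t i"] lt r1 ab by auto
    moreover have "0 \<le> f (t i) - f (t (i - 1)) + C * lam ({t (i - 1)..<t i} \<inter> U)"
      using fmono[of "t (i - 1)" "t i"] lt r1 ab C lam_nonneg[of "{t (i - 1)..<t i} \<inter> U"] by auto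
    ultimately show ?thesis using spl unfolding F_def by (simp add: algebra_simps max_def)
  qed
  have "x \<le> (\<Sum>i\<in>{1..m}. F (t i) - F (t (i - 1)))" unfolding x by (intro sum_mono step)
  also have "\<dots> = F (t m) - F (t 0)" by (rule telesc)
  also have "\<dots> = F b - F a" using P by (simp add: is_partition_def)
  also have "\<dots> = f b - f a + C * lam ({a..<b} \<inter> U)" by (simp add: F_def lam_def)
  finally show "x \<le> f b - f a + C * lam ({a..<b} \<inter> U)" .
qed

end

lemma fin_from_int:
  fixes \<mu> :: "real measure" and T :: real and K :: real
  assumes T: "T > 0" and s\<mu>: "sets \<mu> = sets (restrict_space borel {0<..<T})"
    and le: "\<And>a b. 0 < a \<Longrightarrow> a < b \<Longrightarrow> b < T \<Longrightarrow> emeasure \<mu> {a..<b} \<le> ennreal K"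
  shows "emeasure \<mu> {0<..<T} < \<infinity>"
proof -
  define P where "P n = {T/(real n+2)..<T - T/(real n+2)}" for n :: nat
  have P_sub: "P n \<subseteq> {0<..<T}" for n
  proof -
    have "0 < T/(real n+2)" using T by simp
    moreover have "T - T/(real n+2) < T" using T by simp
    ultimately show ?thesis by (auto simp: P_def)
  qed
  have inc: "incseq P"
  proof (rule incseq_SucI)
    fix n
    have "T/(real (Suc n)+2) \<le> T/(real n+2)" using T by (intro divide_left_mono) auto
    then show "P n \<subseteq> P (Suc n)" unfolding P_def by auto
  qed
  have UP: "(\<Union>n. P n) = {0<..<T}"
  proof
    show "(\<Union>n. P n) \<subseteq> {0<..<T}" using P_sub by auto
    show "{0<..<T} \<subseteq> (\<Union>n. P n)"
    proof
      fix x assume "x \<in> {0<..<T}"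
      then have x: "0 < x" "x < T" by auto
      obtain n :: nat where n: "T / min x (T - x) < real n" using reals_Archimedean2 by blast
      have mpos: "0 < min x (T - x)" using x by simp
      have "T < real n * min x (T - x)" using n mpos by (simp add: field_simps)
      then have "T < (real n + 2) * min x (T - x)" using mpos by (smt (verit) mult_right_mono)
      then have h: "T / (real n + 2) < min x (T - x)"
        by (subst pos_divide_less_eq) (auto simp: mult.commute)
      then show "x \<in> (\<Union>n. P n)" using x by (auto simp: P_def intro!: exI[of _ n])
    qed
  qed
  have PS: "P n \<in> sets \<mu>" for n
    unfolding s\<mu> using P_sub[of n] by (subst sets_restrict_space_iff) (auto simp: P_def)
  have "emeasure \<mu> {0<..<T} = (SUP n. emeasure \<mu> (P n))"
    using SUP_emeasure_incseq[of P \<mu>] inc PS UP by (auto simp: image_subset_iff)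
  also have "\<dots> \<le> ennreal K"
  proof (rule SUP_least)
    fix n
    show "emeasure \<mu> (P n) \<le> ennreal K"
    proof (cases "T/(real n+2) < T - T/(real n+2)")
      case True
      have "0 < T/(real n+2)" using T by simp
      moreover have "T - T/(real n+2) < T" using T by simp
      ultimately show ?thesis unfolding P_def using True by (intro le) auto
    next
      case False then have "P n = {}" by (auto simp: P_def)
      then show ?thesis by simp
    qed
  qed
  finally have "emeasure \<mu> {0<..<T} \<le> ennreal K" .
  then show ?thesis using ennreal_less_top[of K] by (simp add: le_less_trans)
qed

theorem lemma7p1:
  fixes T C :: real and f g :: "real \<Rightarrow> real" and Df Dgp :: "real measure"
  assumes T: "T > 0"
    and f_mono: "mono_on {0<..<T} f"
    and g_bv: "bounded_variation_on g {0<..<T}"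
    and f_lc: "\<forall>t\<in>{0<..<T}. (f \<longlongrightarrow> f t) (at_left t)"
    and g_lc: "\<forall>t\<in>{0<..<T}. (g \<longlongrightarrow> g t) (at_left t)"
    and f_bdd: "bounded (f ` {0<..<T})"
    and g_bdd: "bounded (g ` {0<..<T})"
    and fg: "\<forall>t\<in>{0<..<T}. f t \<ge> g t"
    and C: "C > 0"
    and i: "\<forall>\<epsilon>>0. \<forall>t\<in>{0<..<T}. f t > g t + \<epsilon> \<longrightarrow>
              (\<forall>t'\<in>{0<..<T}. 0 \<le> t' - t \<and> t' - t < \<epsilon> / C \<longrightarrow> f t' = f t \<and> f t' > g t')"
    and ii: "\<forall>t\<in>{0<..<T}. Lim (at_right t) f - f t = max (Lim (at_right t) g - g t) 0"
    and iii: "\<forall>a b. {a..<b} \<subseteq> {t\<in>{0<..<T}. f t > g t} \<longrightarrow>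
               (\<forall>t1 t2. a \<le> t1 \<and> t1 < t2 \<and> t2 < b \<longrightarrow> g t2 - g t1 \<le> C * (t2 - t1))"
    and Df_sets: "sets Df = sets (restrict_space borel {0<..<T})"
    and Df_int: "\<forall>a b. 0 < a \<and> a < b \<and> b < T \<longrightarrow> emeasure Df {a..<b} = ennreal (f b - f a)"
    and Dgp_sets: "sets Dgp = sets (restrict_space borel {0<..<T})"
    and Dgp_int: "\<forall>a b. 0 < a \<and> a < b \<and> b < T \<longrightarrow> emeasure Dgp {a..<b} = ennreal (pos_var g a b)"
  shows "emeasure Df {t\<in>{0<..<T}. f t \<noteq> g t} = 0
         \<and> (\<forall>E. E \<in> sets borel \<and> E \<subseteq> {t\<in>{0<..<T}. f t = g t} \<longrightarrow> emeasure Df E = emeasure Dgp E)"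
proof -
  interpret B: S7B T C f g Dgp
    using T f_mono f_lc g_lc g_bdd fg C i iii g_bv Dgp_sets Dgp_int ii by unfold_locales
  interpret D: S7C T C f g Df
    using T f_mono f_lc g_lc g_bdd fg C i iii Df_sets Df_int by unfold_locales
  have Ueq: "{t\<in>{0<..<T}. f t \<noteq> g t} = B.U" using fg by (auto simp: B.U_def less_le)
  have Zeq: "{t\<in>{0<..<T}. f t = g t} = B.Z" by (simp add: B.Z_def)
  have part1: "emeasure Df {t\<in>{0<..<T}. f t \<noteq> g t} = 0" unfolding Ueq by (rule D.U_null)
  obtain Mf where Mf: "\<forall>x\<in>f ` {0<..<T}. norm x \<le> Mf" using f_bdd unfolding bounded_iff by blast
  have fb: "\<bar>f x\<bar> \<le> Mf" if "x \<in> {0<..<T}" for x using Mf that by auto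
  define \<kappa> where "\<kappa> = restrict_space (density lborel (\<lambda>x. ennreal C * indicator B.U x)) {0<..<T}"
  have s\<kappa>: "sets \<kappa> = sets (restrict_space borel {0<..<T})"
    by (simp add: \<kappa>_def sets_restrict_space)
  have meas: "(\<lambda>x. ennreal C * indicator B.U x) \<in> borel_measurable lborel"
    using B.U_borel by measurable
  have e\<kappa>: "emeasure \<kappa> A = ennreal C * emeasure lborel (A \<inter> B.U)" if A: "A \<in> sets borel" "A \<subseteq> {0<..<T}" for A
  proof -
    have "emeasure \<kappa> A = emeasure (density lborel (\<lambda>x. ennreal C * indicator B.U x)) A"
      unfolding \<kappa>_def using A by (intro emeasure_restrict_space) auto
    also have "\<dots> = (\<integral>\<^sup>+ x. ennreal C * indicator B.U x * indicator A x \<partial>lborel)"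
      using A meas by (intro emeasure_density) auto
    also have "\<dots> = (\<integral>\<^sup>+ x. ennreal C * indicator (A \<inter> B.U) x \<partial>lborel)"
      by (intro nn_integral_cong) (auto split: split_indicator)
    also have "\<dots> = ennreal C * emeasure lborel (A \<inter> B.U)"
      using A B.U_borel by (intro nn_integral_cmult_indicator) auto
    finally show ?thesis .
  qed
  have lamI: "emeasure lborel ({a..<b} \<inter> B.U) = ennreal (B.lam ({a..<b} \<inter> B.U))" for a b
    unfolding B.lam_def using B.lam_Ico_fin by (intro emeasure_eq_ennreal_measure) auto
  have lam_le: "B.lam ({a..<b} \<inter> B.U) \<le> b - a" if "a \<le> b" for a b
  proof -
    have "B.lam ({a..<b} \<inter> B.U) \<le> B.lam {a..<b}" unfolding B.lam_def
      using B.U_borel that by (intro measure_mono_fmeasurable) (auto simp: fmeasurable_def)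
    then show ?thesis using that by (simp add: B.lam_def)
  qed
  have Icoset: "{a..<b} \<in> sets borel" for a b :: real by simp
  have fin_Df: "emeasure Df {0<..<T} < \<infinity>"
  proof (rule fin_from_int[OF T Df_sets, of "2 * Mf"])
    fix a b assume ab: "0 < a" "a < b" "b < T"
    have "f b - f a \<le> 2 * Mf" using fb[of a] fb[of b] ab by auto
    then show "emeasure Df {a..<b} \<le> ennreal (2 * Mf)" using Df_int ab by (auto intro: ennreal_leI)
  qed
  have fin_Dgp: "emeasure Dgp {0<..<T} < \<infinity>"
  proof (rule fin_from_int[OF T Dgp_sets, of "2 * Mf + C * T"])
    fix a b assume ab: "0 < a" "a < b" "b < T"
    have "pos_var g a b \<le> f b - f a + C * B.lam ({a..<b} \<inter> B.U)" using B.B_pv ab by auto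
    also have "\<dots> \<le> 2 * Mf + C * T"
    proof -
      have "f b - f a \<le> 2 * Mf" using fb[of a] fb[of b] ab by auto
      moreover have "C * B.lam ({a..<b} \<inter> B.U) \<le> C * T"
        using lam_le[of a b] ab C by (intro mult_left_mono) auto
      ultimately show ?thesis by simp
    qed
    finally show "emeasure Dgp {a..<b} \<le> ennreal (2 * Mf + C * T)" using Dgp_int ab by (auto intro: ennreal_leI)
  qed
  have fin_\<kappa>: "emeasure \<kappa> {0<..<T} < \<infinity>"
  proof -
    have "emeasure lborel ({0<..<T} \<inter> B.U) \<le> emeasure lborel {0<..<T}"
      using B.U_borel by (intro emeasure_mono) auto
    also have "\<dots> < \<infinity>" using T by simp
    finally show ?thesis using e\<kappa>[of "{0<..<T}"] by (simp add: ennreal_mult_less_top)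
  qed
  have s0: "sets (null_measure Dgp) = sets (restrict_space borel {0<..<T})" using Dgp_sets by simp
  have fin0: "emeasure (null_measure Dgp) {0<..<T} < \<infinity>" by simp
  have part2: "emeasure Df E = emeasure Dgp E" if E: "E \<in> sets borel" "E \<subseteq> B.Z" for E
  proof -
    have EO: "E \<subseteq> {0<..<T}" using E B.UZ(4) by auto
    have ES: "E \<in> sets (restrict_space borel {0<..<T})" using E EO by (subst sets_restrict_space_iff) auto
    have le1: "emeasure Df E \<le> emeasure Dgp E + emeasure (null_measure Dgp) E"
    proof (rule ext_le[OF Df_sets Dgp_sets s0 fin_Df fin_Dgp fin0])
      fix a b :: real assume ab: "0 < a" "a < b" "b < T"
      show "emeasure Df {a..<b} \<le> emeasure Dgp {a..<b} + emeasure (null_measure Dgp) {a..<b}"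
        using Df_int Dgp_int ab B.A_ineq[OF ab] by (auto intro: ennreal_leI)
    next
      show "E \<in> sets Df" using ES Df_sets by simp
    qed
    have le2: "emeasure Dgp E \<le> emeasure Df E + emeasure \<kappa> E"
    proof (rule ext_le[OF Dgp_sets Df_sets s\<kappa> fin_Dgp fin_Df fin_\<kappa>])
      fix a b :: real assume ab: "0 < a" "a < b" "b < T"
      have nn: "0 \<le> f b - f a" using B.fmono[of a b] ab by auto
      have nn2: "0 \<le> C * B.lam ({a..<b} \<inter> B.U)" using mult_nonneg_nonneg[OF less_imp_le[OF C] B.lam_nonneg] .
      have "emeasure Dgp {a..<b} = ennreal (pos_var g a b)" using Dgp_int ab by auto
      also have "\<dots> \<le> ennreal (f b - f a + C * B.lam ({a..<b} \<inter> B.U))" using B.B_pv[OF ab] by (rule ennreal_leI)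
      also have "\<dots> = ennreal (f b - f a) + ennreal C * ennreal (B.lam ({a..<b} \<inter> B.U))"
        using nn nn2 ennreal_mult[OF less_imp_le[OF C] B.lam_nonneg] by simp
      also have "\<dots> = emeasure Df {a..<b} + emeasure \<kappa> {a..<b}"
      proof -
        have sub: "{a..<b} \<subseteq> {0<..<T}" using ab by auto
        have "emeasure \<kappa> {a..<b} = ennreal C * ennreal (B.lam ({a..<b} \<inter> B.U))"
          using e\<kappa>[OF Icoset sub] lamI[of a b] by simp
        then show ?thesis using Df_int ab by auto
      qed
      finally show "emeasure Dgp {a..<b} \<le> emeasure Df {a..<b} + emeasure \<kappa> {a..<b}" .
    next
      show "E \<in> sets Dgp" using ES Dgp_sets by simp
    qed
    have "E \<inter> B.U = {}" using E B.UZ(2) by auto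
    then have "emeasure \<kappa> E = 0" using e\<kappa>[OF E(1) EO] by simp
    then show ?thesis using le1 le2 by (simp add: antisym)
  qed
  show ?thesis using part1 part2 Zeq by auto
qed

end
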